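(* Let $G$ be a connected, simply connected nilpotent Lie group with Lie algebra $\mathfrak g$, and let $\varphi$ be a Lie group endomorphism of $G$ whose differential $\varphi_*:\mathfrak g\to\mathfrak g$ has eigenvalue $1$. Let $N$ be a uniform lattice of $G$ and let $g_1,\dots,g_n\in G$. Then there exists $\alpha\in G$ such that $g_k\varphi(x)\alpha\neq\gamma x$ for all $x\in G$, all $\gamma\in N$ and all $k\in\{1,\dots,n\}$.
   Context: A uniform lattice is a discrete cocompact subgroup. *)

theory Defs
  imports "HOL-Analysis.Analysis" "HOL-Algebra.Algebra"
begin

text \<open>Infinitely (Frechet) differentiable maps between finite-dimensional real spaces:
  D vs x is the iterated derivative of f at x applied to the directions in vs.\<close>
definition smooth_map :: "('a::euclidean_space \<Rightarrow> 'b::euclidean_space) \<Rightarrow> bool" where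
  "smooth_map f \<longleftrightarrow>
     (\<exists>D :: 'a list \<Rightarrow> 'a \<Rightarrow> 'b. D [] = f \<and>
        (\<forall>vs x. (D vs has_derivative (\<lambda>v. D (v # vs) x)) (at x)))"

fun lower_central :: "('a, 'b) monoid_scheme \<Rightarrow> nat \<Rightarrow> 'a set" where
  "lower_central G 0 = carrier G"
| "lower_central G (Suc k) =
     generate G {a \<otimes>\<^bsub>G\<^esub> b \<otimes>\<^bsub>G\<^esub> inv\<^bsub>G\<^esub> a \<otimes>\<^bsub>G\<^esub> inv\<^bsub>G\<^esub> b
                 | a b. a \<in> lower_central G k \<and> b \<in> carrier G}"

definition nilpotent_group :: "('a, 'b) monoid_scheme \<Rightarrow> bool" where
  "nilpotent_group G \<longleftrightarrow> group G \<and> (\<exists>k. lower_central G k = {\<one>\<^bsub>G\<^esub>})"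

text \<open>A connected, simply connected nilpotent Lie group, realised (via the exponential
  diffeomorphism) on a finite-dimensional real vector space 'a with its standard smooth
  structure: the group law and inversion are smooth and the group is nilpotent.\<close>
definition sc_nilpotent_Lie_group :: "('a::euclidean_space) monoid \<Rightarrow> bool" where
  "sc_nilpotent_Lie_group G \<longleftrightarrow>
     nilpotent_group G \<and> carrier G = UNIV \<and>
     smooth_map (\<lambda>p::'a \<times> 'a. fst p \<otimes>\<^bsub>G\<^esub> snd p) \<and> smooth_map (\<lambda>x. inv\<^bsub>G\<^esub> x)"

definition Lie_endomorphism :: "('a::euclidean_space) monoid \<Rightarrow> ('a \<Rightarrow> 'a) \<Rightarrow> bool" where
  "Lie_endomorphism G \<phi> \<longleftrightarrow> \<phi> \<in> hom G G \<and> smooth_map \<phi>"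

text \<open>The differential at the identity (the induced map on the Lie algebra = tangent
  space at the identity) has eigenvalue 1.\<close>
definition differential_has_eigenvalue_one :: "('a::euclidean_space) monoid \<Rightarrow> ('a \<Rightarrow> 'a) \<Rightarrow> bool" where
  "differential_has_eigenvalue_one G \<phi> \<longleftrightarrow>
     (\<exists>\<phi>'. (\<phi> has_derivative \<phi>') (at \<one>\<^bsub>G\<^esub>) \<and> (\<exists>v. v \<noteq> 0 \<and> \<phi>' v = v))"

text \<open>Uniform lattice: a discrete subgroup N with compact quotient N\G, i.e. some compact
  K with G = N K.\<close>
definition uniform_lattice :: "('a::euclidean_space) monoid \<Rightarrow> 'a set \<Rightarrow> bool" where
  "uniform_lattice G N \<longleftrightarrow>
     subgroup N G \<and>
     (\<forall>\<gamma>\<in>N. \<exists>e>0. \<forall>\<delta>\<in>N. dist \<delta> \<gamma> < e \<longrightarrow> \<delta> = \<gamma>) \<and>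
     (\<exists>K. compact K \<and> (\<forall>g\<in>carrier G. \<exists>\<gamma>\<in>N. \<exists>k\<in>K. g = \<gamma> \<otimes>\<^bsub>G\<^esub> k))"

end

theory Submission
  imports Defs "HOL-Library.Countable"
begin


typedef (overloaded) ('a::euclidean_space) bidx = "Basis :: 'a set"
  using nonempty_Basis by blast

instance bidx :: (euclidean_space) finite
proof
  have "(UNIV :: 'a bidx set) = Abs_bidx ` Basis"
    using type_definition.Abs_image[OF type_definition_bidx] by metis
  then show "finite (UNIV :: 'a bidx set)" by (metis finite_Basis finite_imageI)
qed

instantiation bidx :: (euclidean_space) linorder
begin
definition less_eq_bidx :: "'a bidx \<Rightarrow> 'a bidx \<Rightarrow> bool" where
  "less_eq_bidx x y \<longleftrightarrow> to_nat x \<le> to_nat y"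
definition less_bidx :: "'a bidx \<Rightarrow> 'a bidx \<Rightarrow> bool" where
  "less_bidx x y \<longleftrightarrow> to_nat x < to_nat y"
instance
  by standard (auto simp: less_eq_bidx_def less_bidx_def)
end

instance bidx :: (euclidean_space) wellorder
proof -
  have "wf {(x::'a bidx, y). x < y}"
  proof -
    have "{(x::'a bidx, y). x < y} = inv_image less_than to_nat"
      by (auto simp: less_bidx_def)
    then show ?thesis by simp
  qed
  then show "OFCLASS('a bidx, wellorder_class)"
    by (rule wf_wellorderI) (intro_classes)
qed

definition to_cart :: "'a::euclidean_space \<Rightarrow> real ^ ('a bidx)" where
  "to_cart x = (\<chi> i. x \<bullet> Rep_bidx i)"
definition from_cart :: "real ^ ('a bidx) \<Rightarrow> 'a::euclidean_space" where
  "from_cart v = (\<Sum>i\<in>UNIV. (v $ i) *\<^sub>R Rep_bidx i)"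

lemma linear_to_cart: "linear to_cart"
  by (auto simp: linear_iff to_cart_def vec_eq_iff inner_add_left)

lemma linear_from_cart: "linear from_cart"
  by (auto simp: linear_iff from_cart_def scaleR_add_left sum.distrib scaleR_sum_right)

lemma from_to_cart: "from_cart (to_cart x) = x"
proof -
  have "(\<Sum>i\<in>UNIV. (x \<bullet> Rep_bidx i) *\<^sub>R Rep_bidx (i::'a bidx)) = (\<Sum>b\<in>Basis. (x \<bullet> b) *\<^sub>R b)"
    by (rule sum.reindex_bij_betw) (metis type_definition.Rep_range[OF type_definition_bidx] bij_betw_def inj_def Rep_bidx_inject)
  then show ?thesis by (simp add: from_cart_def to_cart_def euclidean_representation)
qed

lemma to_from_cart: "to_cart (from_cart v) = v"
proof -
  have "(\<Sum>i\<in>UNIV. (v $ i) *\<^sub>R Rep_bidx i) \<bullet> Rep_bidx j = v $ j" for j :: "'a bidx"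
  proof -
    have "(\<Sum>i\<in>UNIV. (v $ i) *\<^sub>R Rep_bidx i) \<bullet> Rep_bidx j = (\<Sum>i\<in>UNIV. (v $ i) * (Rep_bidx i \<bullet> Rep_bidx j))"
      by (simp add: inner_sum_left)
    also have "\<dots> = (\<Sum>i\<in>UNIV. if i = j then v $ i else 0)"
      by (rule sum.cong) (auto simp: inner_not_same_Basis Rep_bidx Rep_bidx_inject)
    finally show ?thesis by simp
  qed
  then show ?thesis by (simp add: from_cart_def to_cart_def vec_eq_iff)
qed

lemma euclidean_Sard:
  fixes f :: "'a::euclidean_space \<Rightarrow> 'a"
  assumes der: "\<And>x. (f has_derivative f' x) (at x)"
    and ninj: "\<And>x. \<not> inj (f' x)"
  shows "negligible (range f)"
proof -
  define g where "g = to_cart \<circ> f \<circ> from_cart"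
  define g' where "g' = (\<lambda>v. to_cart \<circ> f' (from_cart v) \<circ> from_cart)"
  have lt: "linear to_cart" and lf: "linear from_cart" by (rule linear_to_cart, rule linear_from_cart)
  have dg: "(g has_derivative g' v) (at v within UNIV)" for v
    unfolding g_def g'_def
    by (intro diff_chain_at linear_imp_has_derivative lt lf der)
  have "linear (g' v)" for v using dg has_derivative_linear by blast
  moreover have "\<not> inj (g' v)" for v
  proof
    assume "inj (g' v)"
    obtain a b where "a \<noteq> b" "f' (from_cart v) a = f' (from_cart v) b" using ninj unfolding inj_def by blast
    then have "g' v (to_cart a) = g' v (to_cart b)" by (simp add: g'_def from_to_cart)
    with \<open>inj (g' v)\<close> have "to_cart a = to_cart b" by (simp add: inj_def)
    then have "from_cart (to_cart a) = from_cart (to_cart b)" by simp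
    with \<open>a \<noteq> b\<close> show False by (simp add: from_to_cart)
  qed
  ultimately have "rank (matrix (g' v)) < CARD('a bidx)" for v
    by (simp add: less_rank_noninjective)
  then have "negligible (g ` UNIV)"
    by (intro baby_Sard[OF order_refl dg])
  moreover have "DIM(real ^ 'a bidx) \<le> DIM('a)"
  proof -
    have "CARD('a bidx) = card (range (Rep_bidx :: 'a bidx \<Rightarrow> 'a))"
      by (simp add: card_image inj_def Rep_bidx_inject)
    also have "range (Rep_bidx :: 'a bidx \<Rightarrow> 'a) = Basis"
      using type_definition.Rep_range[OF type_definition_bidx] by metis
    finally show "DIM(real ^ 'a bidx) \<le> DIM('a)" by simp
  qed
  ultimately have "negligible (from_cart ` g ` UNIV)"
    using negligible_differentiable_image_negligible linear_imp_differentiable_on lf by blast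
  moreover have "from_cart ` g ` UNIV = range f"
  proof -
    have "from_cart ` g ` UNIV = (from_cart \<circ> g) ` UNIV" by (simp add: image_comp)
    also have "\<dots> = (f \<circ> from_cart) ` UNIV" by (simp add: g_def o_def from_to_cart)
    also have "\<dots> = range f" by (metis image_comp surj_def from_to_cart)
    finally show ?thesis .
  qed
  ultimately show ?thesis by simp
qed


lemma discrete_countable:
  fixes S :: "'a::euclidean_space set"
  assumes "\<forall>\<gamma>\<in>S. \<exists>e>0. \<forall>\<delta>\<in>S. dist \<delta> \<gamma> < e \<longrightarrow> \<delta> = \<gamma>"
  shows "countable S"
proof -
  obtain \<B> :: "'a set set" where B0: "countable \<B>" "topological_basis \<B>"
    using ex_countable_basis by blast
  have B3: "\<exists>U. U \<subseteq> \<B> \<and> T = \<Union>U" if "open T" for T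
    using B0(2) that unfolding topological_basis_def by blast
  note B = B0(1) B0(1) B3
  have ex: "\<exists>U\<in>\<B>. \<gamma> \<in> U \<and> (\<forall>\<delta>\<in>S. \<delta> \<in> U \<longrightarrow> \<delta> = \<gamma>)" if "\<gamma> \<in> S" for \<gamma>
  proof -
    have "\<exists>e>0. \<forall>\<delta>\<in>S. dist \<delta> \<gamma> < e \<longrightarrow> \<delta> = \<gamma>" using assms that by (rule bspec)
    then obtain e where e: "e > 0" "\<forall>\<delta>\<in>S. dist \<delta> \<gamma> < e \<longrightarrow> \<delta> = \<gamma>" by (elim exE conjE)
    obtain U where U: "U \<subseteq> \<B>" "ball \<gamma> e = \<Union>U" using B(3)[of "ball \<gamma> e"] by auto
    have "\<gamma> \<in> ball \<gamma> e" using e(1) by simp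
    then have "\<gamma> \<in> \<Union>U" using U(2) by blast
    then obtain C where C: "C \<in> U" "\<gamma> \<in> C" by blast
    have "C \<subseteq> ball \<gamma> e" using U(2) C(1) by blast
    then have "\<forall>\<delta>\<in>S. \<delta> \<in> C \<longrightarrow> \<delta> = \<gamma>" using e(2) by (simp add: subset_iff dist_commute)
    then show ?thesis using C U(1) by blast
  qed
  have "\<forall>\<gamma>\<in>S. \<exists>U. U \<in> \<B> \<and> \<gamma> \<in> U \<and> (\<forall>\<delta>\<in>S. \<delta> \<in> U \<longrightarrow> \<delta> = \<gamma>)"
    using ex by blast
  then obtain f where f: "\<forall>\<gamma>\<in>S. f \<gamma> \<in> \<B> \<and> \<gamma> \<in> f \<gamma> \<and> (\<forall>\<delta>\<in>S. \<delta> \<in> f \<gamma> \<longrightarrow> \<delta> = \<gamma>)"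
    by (rule bchoice[THEN exE]) blast
  have "inj_on f S"
  proof (rule inj_onI)
    fix x y assume "x \<in> S" "y \<in> S" "f x = f y"
    then show "x = y" using f by blast
  qed
  moreover have "f ` S \<subseteq> \<B>" using f by blast
  then have "countable (f ` S)" using B(1) countable_subset by blast
  ultimately show ?thesis using countable_image_inj_on by blast
qed

locale sgrp = group G for G :: "('a::euclidean_space) monoid" (structure) +
  fixes r :: nat
  assumes univ: "carrier G = UNIV"
    and dmul: "\<And>p. (\<lambda>p. fst p \<otimes> snd p) differentiable (at p)"
    and dinv: "\<And>x. (\<lambda>x. inv x) differentiable (at x)"
    and nil: "lower_central G r = {\<one>}"
begin

definition DM where "DM p = frechet_derivative (\<lambda>p. fst p \<otimes> snd p) (at p)"

lemma DM: "((\<lambda>p. fst p \<otimes> snd p) has_derivative DM p) (at p)"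
  using dmul frechet_derivative_works DM_def by metis

lemma mul_deriv:
  assumes "(a has_derivative A) (at x)" "(b has_derivative B) (at x)"
  shows "((\<lambda>h. a h \<otimes> b h) has_derivative (\<lambda>w. DM (a x, b x) (A w, B w))) (at x)"
proof -
  have "((\<lambda>h. (a h, b h)) has_derivative (\<lambda>w. (A w, B w))) (at x)"
    by (rule has_derivative_Pair[OF assms])
  from diff_chain_at[OF this DM[of "(a x, b x)"]] show ?thesis by (simp add: o_def)
qed

lemma DM_e: "DM (\<one>, \<one>) (u, w) = u + w"
proof -
  have lin: "linear (DM p)" for p using DM has_derivative_linear by blast
  have 1: "((\<lambda>h. h \<otimes> \<one>) has_derivative (\<lambda>w. DM (\<one>,\<one>) (w, 0))) (at \<one>)"
    using mul_deriv[OF has_derivative_ident has_derivative_const, of "\<one>" "\<one>"] by simp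
  have "(\<lambda>h. h \<otimes> \<one>) = (\<lambda>h. h)" using univ by auto
  with 1 have a: "(\<lambda>w. DM (\<one>,\<one>) (w, 0)) = (\<lambda>w. w)"
    using has_derivative_unique has_derivative_ident by metis
  have 2: "((\<lambda>h. \<one> \<otimes> h) has_derivative (\<lambda>w. DM (\<one>,\<one>) (0, w))) (at \<one>)"
    using mul_deriv[OF has_derivative_const has_derivative_ident, of "\<one>" "\<one>"] by simp
  have "(\<lambda>h. \<one> \<otimes> h) = (\<lambda>h. h)" using univ by auto
  with 2 have b: "(\<lambda>w. DM (\<one>,\<one>) (0, w)) = (\<lambda>w. w)"
    using has_derivative_unique has_derivative_ident by metis
  have "DM (\<one>, \<one>) (u, w) = DM (\<one>, \<one>) ((u, 0) + (0, w))" by simp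
  also have "\<dots> = DM (\<one>, \<one>) (u, 0) + DM (\<one>, \<one>) (0, w)" using lin linear_add by blast
  also have "\<dots> = u + w" using a b by metis
  finally show ?thesis .
qed

definition DI where "DI x = frechet_derivative (\<lambda>x. inv x) (at x)"

lemma DI: "((\<lambda>x. inv x) has_derivative DI x) (at x)"
  using dinv frechet_derivative_works DI_def by metis

lemma DI_e: "DI \<one> w = - w"
proof -
  have 1: "((\<lambda>h. h \<otimes> inv h) has_derivative (\<lambda>w. DM (\<one>, inv \<one>) (w, DI \<one> w))) (at \<one>)"
    using mul_deriv[OF has_derivative_ident DI[of \<one>]] by simp
  have "(\<lambda>h. h \<otimes> inv h) = (\<lambda>h. \<one>)" using univ by auto
  with 1 have "(\<lambda>w. DM (\<one>, inv \<one>) (w, DI \<one> w)) = (\<lambda>w. 0)"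
    using has_derivative_unique has_derivative_const by metis
  then have "w + DI \<one> w = 0" using DM_e by (metis inv_one)
  then show ?thesis by (simp add: eq_neg_iff_add_eq_0 add.commute)
qed

lemma mul_deriv_e:
  assumes "(a has_derivative A) (at \<one>)" "(b has_derivative B) (at \<one>)" "a \<one> = \<one>" "b \<one> = \<one>"
  shows "((\<lambda>h. a h \<otimes> b h) has_derivative (\<lambda>w. A w + B w)) (at \<one>)"
  using mul_deriv[OF assms(1,2)] by (simp add: assms DM_e)

lemma inv_deriv_e:
  assumes "(a has_derivative A) (at \<one>)" "a \<one> = \<one>"
  shows "((\<lambda>h. inv (a h)) has_derivative (\<lambda>w. - A w)) (at \<one>)"
  using diff_chain_at[OF assms(1), of "\<lambda>x. inv x" "DI \<one>"] DI[of \<one>] assms(2)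
  by (simp add: o_def DI_e)

lemma mul_differentiable:
  assumes "a differentiable (at x)" "b differentiable (at x)"
  shows "(\<lambda>h. a h \<otimes> b h) differentiable (at x)"
  using assms mul_deriv unfolding differentiable_def by blast

lemma inv_differentiable:
  assumes "a differentiable (at x)"
  shows "(\<lambda>h. inv (a h)) differentiable (at x)"
proof -
  obtain A where "(a has_derivative A) (at x)" using assms differentiable_def by blast
  from diff_chain_at[OF this DI[of "a x"]] show ?thesis
    unfolding differentiable_def o_def by blast
qed

definition cj where "cj y h = y \<otimes> h \<otimes> inv y"
definition Ad where "Ad y = frechet_derivative (cj y) (at \<one>)"

lemma cj_differentiable: "cj y differentiable (at x)"
  unfolding cj_def
  by (intro mul_differentiable differentiable_const differentiable_ident)

lemma Ad: "(cj y has_derivative Ad y) (at \<one>)"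
  using cj_differentiable frechet_derivative_works Ad_def by metis

lemma Ad_linear: "linear (Ad y)"
  using Ad has_derivative_linear by blast

lemma cj_one[simp]: "cj y \<one> = \<one>"
  using univ by (simp add: cj_def)

lemma Ad_mult: "Ad (x \<otimes> z) = Ad x \<circ> Ad z"
proof -
  have "cj (x \<otimes> z) = cj x \<circ> cj z"
    using univ by (auto simp: cj_def m_assoc inv_mult_group)
  moreover have "(cj x \<circ> cj z has_derivative Ad x \<circ> Ad z) (at \<one>)"
    using diff_chain_at[OF Ad[of z], of "cj x" "Ad x"] Ad[of x] by simp
  ultimately show ?thesis using Ad[of "x \<otimes> z"] has_derivative_unique by metis
qed

definition cm where "cm y h = h \<otimes> y \<otimes> inv h \<otimes> inv y"

lemma cm_one[simp]: "cm y \<one> = \<one>"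
  using univ by (simp add: cm_def)

lemma cm_deriv: "(cm y has_derivative (\<lambda>w. w - Ad y w)) (at \<one>)"
proof -
  have eq: "cm y = (\<lambda>h. h \<otimes> cj y (inv h))"
    using univ by (auto simp: cm_def cj_def m_assoc)
  have "((\<lambda>h. inv h) has_derivative (\<lambda>w. - w)) (at \<one>)"
    using inv_deriv_e[OF has_derivative_ident] by simp
  from diff_chain_at[OF this, of "cj y" "Ad y"] Ad[of y]
  have "((\<lambda>h. cj y (inv h)) has_derivative (\<lambda>w. Ad y (- w))) (at \<one>)"
    by (simp add: o_def)
  from mul_deriv_e[OF has_derivative_ident this] show ?thesis
    using Ad_linear[of y] by (simp add: eq linear_neg)
qed

primrec itc where
  "itc [] h = h"
| "itc (y # ys) h = cm y (itc ys h)"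

primrec PP where
  "PP [] w = w"
| "PP (y # ys) w = PP ys w - Ad y (PP ys w)"

lemma itc_one[simp]: "itc ys \<one> = \<one>"
  by (induction ys) auto

lemma itc_deriv: "(itc ys has_derivative PP ys) (at \<one>)"
proof (induction ys)
  case Nil
  then show ?case by (simp add: has_derivative_ident[unfolded id_def] )
next
  case (Cons y ys)
  from diff_chain_at[OF Cons, of "cm y" "\<lambda>w. w - Ad y w"] cm_deriv[of y]
  show ?case by (simp add: o_def)
qed

lemma PP_linear: "linear (PP ys)"
  using itc_deriv has_derivative_linear by blast

lemma itc_lc: "itc ys h \<in> lower_central G (length ys)"
proof (induction ys)
  case Nil
  then show ?case using univ by simp
next
  case (Cons y ys)
  then show ?case using univ
    by (auto simp: cm_def intro!: generate.incl)
qed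

lemma PP_zero: "length ys = r \<Longrightarrow> PP ys w = 0"
proof -
  assume "length ys = r"
  then have "itc ys = (\<lambda>_. \<one>)" using itc_lc nil by auto
  then have "PP ys = (\<lambda>_. 0)"
    using itc_deriv[of ys] has_derivative_unique has_derivative_const by metis
  then show ?thesis by simp
qed

end


lemma span_map_into:
  assumes lin: "linear f" and gen: "\<And>x. x \<in> S \<Longrightarrow> f x \<in> span T" and y: "y \<in> span S"
  shows "f y \<in> span T"
proof -
  have "span (f ` S) \<subseteq> span T"
    by (rule span_minimal) (use gen in \<open>auto simp: subspace_span\<close>)
  moreover have "f y \<in> f ` span S" using y by blast
  ultimately show ?thesis using linear_span_image[OF lin] by blast
qed

locale sgrp_phi = sgrp +
  fixes \<phi> \<phi>' :: "'a \<Rightarrow> 'a"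
  assumes hom: "\<And>x y. \<phi> (x \<otimes> y) = \<phi> x \<otimes> \<phi> y"
    and dphi: "\<And>x. \<phi> differentiable (at x)"
    and dphi1: "(\<phi> has_derivative \<phi>') (at \<one>)"
begin

lemma phi_one[simp]: "\<phi> \<one> = \<one>"
proof -
  have "\<phi> \<one> \<otimes> \<phi> \<one> = \<phi> \<one> \<otimes> \<one>" using hom[of \<one> \<one>] univ by simp
  then show ?thesis using univ l_cancel by blast
qed

lemma phi_inv[simp]: "\<phi> (inv x) = inv (\<phi> x)"
proof -
  have "\<phi> (inv x) \<otimes> \<phi> x = \<one>" using hom[of "inv x" x] univ by simp
  then show ?thesis using inv_equality univ by (metis UNIV_I)
qed

lemma phi'_linear: "linear \<phi>'"
  using dphi1 has_derivative_linear by blast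

lemma phi_Ad: "\<phi>' (Ad z w) = Ad (\<phi> z) (\<phi>' w)"
proof -
  have "\<phi> \<circ> cj z = cj (\<phi> z) \<circ> \<phi>"
    by (auto simp: cj_def hom)
  moreover have "(\<phi> \<circ> cj z has_derivative \<phi>' \<circ> Ad z) (at \<one>)"
    using diff_chain_at[OF Ad[of z], of \<phi> \<phi>'] dphi1 by simp
  moreover have "(cj (\<phi> z) \<circ> \<phi> has_derivative Ad (\<phi> z) \<circ> \<phi>') (at \<one>)"
    using diff_chain_at[OF dphi1, of "cj (\<phi> z)" "Ad (\<phi> z)"] Ad[of "\<phi> z"] by simp
  ultimately have "\<phi>' \<circ> Ad z = Ad (\<phi> z) \<circ> \<phi>'" using has_derivative_unique by metis
  then show ?thesis by (metis comp_apply)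
qed

lemma Ad_conj: "Ad x (Ad z w) = Ad (x \<otimes> z \<otimes> inv x) (Ad x w)"
proof -
  have "x \<otimes> z \<otimes> inv x \<otimes> x = x \<otimes> z" using univ by (simp add: m_assoc)
  then show ?thesis using Ad_mult[of x z] Ad_mult[of "x \<otimes> z \<otimes> inv x" x] by (metis comp_apply)
qed

lemma PP_Ad: "Ad x (PP zs u) = PP (map (\<lambda>z. x \<otimes> z \<otimes> inv x) zs) (Ad x u)"
  by (induction zs) (simp_all add: linear_diff[OF Ad_linear] Ad_conj)

lemma PP_phi: "\<phi>' (PP zs u) = PP (map \<phi> zs) (\<phi>' u)"
  by (induction zs) (simp_all add: linear_diff[OF phi'_linear] phi_Ad)

definition W where "W j = span {PP zs u | zs u. length zs = j}"

lemma W_step: "w \<in> W j \<Longrightarrow> w - Ad z w \<in> W (Suc j)"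
  unfolding W_def
proof (rule span_map_into[of "\<lambda>w. w - Ad z w"])
  show "linear (\<lambda>w. w - Ad z w)"
    using Ad_linear[of z] by (simp add: linear_compose_sub linear_ident)
next
  fix x assume "x \<in> {PP zs u | zs u. length zs = j}"
  then obtain zs u where "x = PP zs u" "length zs = j" by blast
  then have "x - Ad z x = PP (z # zs) u \<and> length (z # zs) = Suc j" by simp
  then show "x - Ad z x \<in> span {PP zs u | zs u. length zs = Suc j}"
    by (blast intro: span_base)
qed

lemma W_Ad: "w \<in> W j \<Longrightarrow> Ad x w \<in> W j"
  unfolding W_def
proof (rule span_map_into[OF Ad_linear])
  fix y assume "y \<in> {PP zs u | zs u. length zs = j}"
  then obtain zs u where "y = PP zs u" "length zs = j" by blast
  then have "Ad x y = PP (map (\<lambda>z. x \<otimes> z \<otimes> inv x) zs) (Ad x u) \<and> length (map (\<lambda>z. x \<otimes> z \<otimes> inv x) zs) = j"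
    by (simp add: PP_Ad)
  then show "Ad x y \<in> span {PP zs u | zs u. length zs = j}"
    by (blast intro: span_base)
qed

lemma W_phi: "w \<in> W j \<Longrightarrow> \<phi>' w \<in> W j"
  unfolding W_def
proof (rule span_map_into[OF phi'_linear])
  fix y assume "y \<in> {PP zs u | zs u. length zs = j}"
  then obtain zs u where "y = PP zs u" "length zs = j" by blast
  then have "\<phi>' y = PP (map \<phi> zs) (\<phi>' u) \<and> length (map \<phi> zs) = j"
    by (simp add: PP_phi)
  then show "\<phi>' y \<in> span {PP zs u | zs u. length zs = j}"
    by (blast intro: span_base)
qed

lemma W0: "v \<in> W 0"
proof -
  have "v = PP [] v" by simp
  then show ?thesis unfolding W_def by (blast intro: span_base)
qed

lemma Wr: "W r \<subseteq> {0}"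
proof -
  have "{PP zs u | zs u. length zs = r} \<subseteq> {0}" using PP_zero by auto
  then have "W r \<subseteq> span {0}" unfolding W_def by (rule span_mono)
  then show ?thesis by (simp add: span_insert_0)
qed

lemma W_subspace: "subspace (W j)"
  by (simp add: W_def subspace_span)

lemma key_lin:
  assumes "v \<noteq> 0" "\<phi>' v = v"
  shows "\<exists>w. w \<noteq> 0 \<and> Ad a (\<phi>' w) = w"
proof (rule ccontr)
  assume nex: "\<not> ?thesis"
  have "\<exists>i. v \<in> W i \<and> v \<notin> W (Suc i)"
  proof (rule ccontr)
    assume "\<not> ?thesis"
    then have "v \<in> W i" for i by (induction i) (auto simp: W0)
    then show False using Wr assms(1) by blast
  qed
  then obtain i where vi: "v \<in> W i" "v \<notin> W (Suc i)" by blast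
  define S where "S = (\<lambda>w. w - Ad a (\<phi>' w))"
  have linS: "linear S"
    unfolding S_def using Ad_linear[of a] phi'_linear
    by (intro linear_compose_sub linear_ident) (simp add: linear_compose[unfolded o_def])
  have injS: "inj S"
  proof (rule linear_inj_iff_eq_0[OF linS, THEN iffD2], intro allI impI)
    fix w assume "S w = 0" then show "w = 0" using nex by (simp add: S_def) metis
  qed
  let ?V = "W (Suc i)"
  have sub: "S ` ?V \<subseteq> ?V"
    using W_Ad W_phi W_subspace by (auto simp: S_def intro: subspace_diff)
  have "dim (S ` ?V) = dim ?V"
    by (rule dim_image_eq[OF linS]) (use injS in \<open>auto intro: inj_on_subset\<close>)
  then have eq: "S ` ?V = ?V"
    by (intro subspace_dim_equal linear_subspace_image linS W_subspace sub) auto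
  have "S v \<in> ?V" using W_step[OF vi(1), of a] assms(2) by (simp add: S_def)
  then obtain u where "u \<in> ?V" "S u = S v" using eq by (metis imageE)
  then have "u = v" using injS by (simp add: inj_def)
  then show False using \<open>u \<in> ?V\<close> vi(2) by simp
qed

end


context sgrp_phi
begin

lemma F_negligible:
  assumes "v \<noteq> 0" "\<phi>' v = v"
  shows "negligible (range (\<lambda>x. inv (\<phi> x) \<otimes> c \<otimes> x))"
proof (rule euclidean_Sard)
  define F where "F = (\<lambda>x. inv (\<phi> x) \<otimes> c \<otimes> x)"
  have Fd: "F differentiable (at x)" for x
    unfolding F_def
    by (intro mul_differentiable inv_differentiable dphi differentiable_const differentiable_ident)
  show "(F has_derivative frechet_derivative F (at x)) (at x)" for x
    using Fd frechet_derivative_works by blast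
  show "\<not> inj (frechet_derivative F (at x))" for x
  proof
    assume inj: "inj (frechet_derivative F (at x))"
    define F' where "F' = frechet_derivative F (at x)"
    have F': "(F has_derivative F') (at x)" using Fd frechet_derivative_works F'_def by blast
    have linF': "linear F'" using F' has_derivative_linear by blast
    define y where "y = F x"
    obtain Lx' where Lx': "((\<lambda>h. x \<otimes> h) has_derivative Lx') (at \<one>)"
      using mul_differentiable[OF differentiable_const differentiable_ident] differentiable_def by blast
    obtain Ly' where Ly': "((\<lambda>h. y \<otimes> h) has_derivative Ly') (at \<one>)"
      using mul_differentiable[OF differentiable_const differentiable_ident] differentiable_def by blast
    obtain K where K: "((\<lambda>h. inv x \<otimes> h) has_derivative K) (at x)"
      using mul_differentiable[OF differentiable_const differentiable_ident] differentiable_def by blast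
    have linK: "linear K" and linLy: "linear Ly'" using K Ly' has_derivative_linear by blast+
    have "((\<lambda>h. inv x \<otimes> h) \<circ> (\<lambda>h. x \<otimes> h) has_derivative K \<circ> Lx') (at \<one>)"
      using diff_chain_at[OF Lx', of "\<lambda>h. inv x \<otimes> h" K] K univ by simp
    moreover have "(\<lambda>h. inv x \<otimes> h) \<circ> (\<lambda>h. x \<otimes> h) = (\<lambda>h. h)"
      using univ by (auto simp: m_assoc[symmetric])
    ultimately have KL: "K \<circ> Lx' = (\<lambda>h. h)"
      by (intro has_derivative_unique[OF _ has_derivative_ident]) simp
    define \<Theta> where "\<Theta> = (\<lambda>h. cj (inv y) (inv (\<phi> h)) \<otimes> h)"
    have "((\<lambda>h. inv (\<phi> h)) has_derivative (\<lambda>w. - \<phi>' w)) (at \<one>)"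
      using inv_deriv_e[OF dphi1] by simp
    from diff_chain_at[OF this, of "cj (inv y)" "Ad (inv y)"] Ad[of "inv y"]
    have "((\<lambda>h. cj (inv y) (inv (\<phi> h))) has_derivative (\<lambda>w. Ad (inv y) (- \<phi>' w))) (at \<one>)"
      using univ by (simp add: o_def)
    from mul_deriv_e[OF this has_derivative_ident]
    have Th: "(\<Theta> has_derivative (\<lambda>w. Ad (inv y) (- \<phi>' w) + w)) (at \<one>)"
      using univ by (simp add: \<Theta>_def)
    have Th1: "\<Theta> \<one> = \<one>" using univ by (simp add: \<Theta>_def)
    obtain w where w: "w \<noteq> 0" "Ad (inv y) (\<phi>' w) = w" using key_lin[OF assms] by blast
    have "F \<circ> (\<lambda>h. x \<otimes> h) = (\<lambda>h. y \<otimes> h) \<circ> \<Theta>"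
    proof (rule ext)
      fix h
      have 1: "y \<otimes> \<Theta> h = inv (\<phi> h) \<otimes> y \<otimes> h"
        using univ by (simp add: \<Theta>_def cj_def m_assoc[symmetric])
      have 2: "F (x \<otimes> h) = inv (\<phi> h) \<otimes> y \<otimes> h"
        using univ by (simp add: F_def y_def hom inv_mult_group m_assoc)
      show "(F \<circ> (\<lambda>h. x \<otimes> h)) h = ((\<lambda>h. y \<otimes> h) \<circ> \<Theta>) h"
        using 1 2 by simp
    qed
    moreover have "(F \<circ> (\<lambda>h. x \<otimes> h) has_derivative F' \<circ> Lx') (at \<one>)"
      using diff_chain_at[OF Lx', of F F'] F' univ by simp
    moreover have "((\<lambda>h. y \<otimes> h) \<circ> \<Theta> has_derivative Ly' \<circ> (\<lambda>w. Ad (inv y) (- \<phi>' w) + w)) (at \<one>)"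
      using diff_chain_at[OF Th, of "\<lambda>h. y \<otimes> h" Ly'] Ly' Th1 by simp
    ultimately have eq: "F' \<circ> Lx' = Ly' \<circ> (\<lambda>w. Ad (inv y) (- \<phi>' w) + w)"
      by (intro has_derivative_unique) simp_all
    have "Ad (inv y) (- \<phi>' w) + w = 0"
      using w Ad_linear[of "inv y"] by (simp add: linear_neg)
    then have "F' (Lx' w) = 0" using fun_cong[OF eq, of w] linear_0[OF linLy] by simp
    moreover have "Lx' w \<noteq> 0"
    proof
      assume "Lx' w = 0"
      then have "K (Lx' w) = 0" using linK by (simp add: linear_0)
      then show False using fun_cong[OF KL, of w] w(1) by simp
    qed
    moreover have "F' 0 = 0" using linF' by (simp add: linear_0)
    ultimately show False using injD[OF inj[folded F'_def], of "Lx' w" 0] by simp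
  qed
qed

end

lemma smooth_diff: "smooth_map f \<Longrightarrow> f differentiable (at x)"
proof -
  assume "smooth_map f"
  then obtain D where D: "D [] = f" "\<And>vs x. (D vs has_derivative (\<lambda>v. D (v # vs) x)) (at x)"
    unfolding smooth_map_def by blast
  show ?thesis unfolding differentiable_def using D(2)[of "[]" x] D(1) by blast
qed

theorem mainTheorem15:
  fixes G :: "('a::euclidean_space) monoid"
    and \<phi> :: "'a \<Rightarrow> 'a" and N :: "'a set" and g :: "nat \<Rightarrow> 'a" and n :: nat
  assumes "sc_nilpotent_Lie_group G"
    and "Lie_endomorphism G \<phi>"
    and "differential_has_eigenvalue_one G \<phi>"
    and "uniform_lattice G N"
    and "\<forall>k\<in>{1..n}. g k \<in> carrier G"
  shows "\<exists>\<alpha>\<in>carrier G. \<forall>x\<in>carrier G. \<forall>\<gamma>\<in>N. \<forall>k\<in>{1..n}.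
           g k \<otimes>\<^bsub>G\<^esub> \<phi> x \<otimes>\<^bsub>G\<^esub> \<alpha> \<noteq> \<gamma> \<otimes>\<^bsub>G\<^esub> x"
proof -
  from assms(1) have grp: "group G" and univ: "carrier G = UNIV"
    and sm: "smooth_map (\<lambda>p::'a \<times> 'a. fst p \<otimes>\<^bsub>G\<^esub> snd p)" and si: "smooth_map (\<lambda>x. inv\<^bsub>G\<^esub> x)"
    and nilp: "\<exists>k. lower_central G k = {\<one>\<^bsub>G\<^esub>}"
    unfolding sc_nilpotent_Lie_group_def nilpotent_group_def by auto
  obtain r where r: "lower_central G r = {\<one>\<^bsub>G\<^esub>}" using nilp by blast
  from assms(2) have hm: "\<phi> \<in> hom G G" and sp: "smooth_map \<phi>"
    unfolding Lie_endomorphism_def by auto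
  from assms(3) obtain \<phi>' v where d1: "(\<phi> has_derivative \<phi>') (at \<one>\<^bsub>G\<^esub>)" and v: "v \<noteq> 0" "\<phi>' v = v"
    unfolding differential_has_eigenvalue_one_def by blast
  have hom': "\<And>x y. \<phi> (x \<otimes>\<^bsub>G\<^esub> y) = \<phi> x \<otimes>\<^bsub>G\<^esub> \<phi> y"
    using hm univ by (simp add: hom_mult)
  interpret sgrp_phi G r \<phi> \<phi>'
    by (intro sgrp_phi.intro sgrp.intro sgrp_axioms.intro sgrp_phi_axioms.intro grp univ r hom' d1
          smooth_diff[OF sm] smooth_diff[OF si] smooth_diff[OF sp])
  from assms(4) have disc: "\<forall>\<gamma>\<in>N. \<exists>e>0. \<forall>\<delta>\<in>N. dist \<delta> \<gamma> < e \<longrightarrow> \<delta> = \<gamma>"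
    unfolding uniform_lattice_def by blast
  have cN: "countable N" using discrete_countable[OF disc] .
  define B where "B = (\<Union>p\<in>{1..n} \<times> N. range (\<lambda>x. inv\<^bsub>G\<^esub> (\<phi> x) \<otimes>\<^bsub>G\<^esub> (inv\<^bsub>G\<^esub> (g (fst p)) \<otimes>\<^bsub>G\<^esub> snd p) \<otimes>\<^bsub>G\<^esub> x))"
  have "negligible B"
    unfolding B_def
  proof (rule negligible_countable_Union)
    show "countable ((\<lambda>p. range (\<lambda>x. inv\<^bsub>G\<^esub> (\<phi> x) \<otimes>\<^bsub>G\<^esub> (inv\<^bsub>G\<^esub> (g (fst p)) \<otimes>\<^bsub>G\<^esub> snd p) \<otimes>\<^bsub>G\<^esub> x)) ` ({1..n} \<times> N))"
      using cN by simp
  qed (use F_negligible[OF v] in auto)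
  then have "B \<noteq> UNIV" using non_negligible_UNIV by force
  then obtain \<alpha> where "\<alpha> \<notin> B" by blast
  show ?thesis
  proof (intro bexI ballI)
    fix x \<gamma> k assume "\<gamma> \<in> N" "k \<in> {1..n}"
    show "g k \<otimes>\<^bsub>G\<^esub> \<phi> x \<otimes>\<^bsub>G\<^esub> \<alpha> \<noteq> \<gamma> \<otimes>\<^bsub>G\<^esub> x"
    proof
      assume e: "g k \<otimes>\<^bsub>G\<^esub> \<phi> x \<otimes>\<^bsub>G\<^esub> \<alpha> = \<gamma> \<otimes>\<^bsub>G\<^esub> x"
      have "\<alpha> = inv\<^bsub>G\<^esub> (g k \<otimes>\<^bsub>G\<^esub> \<phi> x) \<otimes>\<^bsub>G\<^esub> (\<gamma> \<otimes>\<^bsub>G\<^esub> x)"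
        using e univ by (simp add: inv_solve_left)
      then have "\<alpha> = inv\<^bsub>G\<^esub> (\<phi> x) \<otimes>\<^bsub>G\<^esub> (inv\<^bsub>G\<^esub> (g k) \<otimes>\<^bsub>G\<^esub> \<gamma>) \<otimes>\<^bsub>G\<^esub> x"
        using univ by (simp add: inv_mult_group m_assoc)
      then have "\<alpha> \<in> B" unfolding B_def using \<open>\<gamma> \<in> N\<close> \<open>k \<in> {1..n}\<close>
        by (intro UN_I[of "(k, \<gamma>)"]) auto
      then show False using \<open>\<alpha> \<notin> B\<close> by blast
    qed
  qed (simp add: univ)
qed

end
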